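(* Let $k\in\mathbb{N}$ and let $P$ be a path with $k$ edges whose vertices in order are $x_0,x_1,\dots,x_k$. Let $L$ be an $m$-assignment for $P$ with $m\ge 2$. For each $(c,d)\in L(x_0)\times L(x_k)$, let $N(c,d)$ be the number of proper $L$-colorings of $P$ in which $x_0$ is colored $c$ and $x_k$ is colored $d$. Then for every such $(c,d)$, $$N(c,d)\ge \min\left\{\frac{(m-1)^k-(-1)^k}{m},\ \frac{(m-1)^k-(-1)^k}{m}+(-1)^k\right\}.$$ Moreover, there is a partition $\{A,B\}$ of $L(x_0)\times L(x_k)$ with $|A|=m$ and $|B|=m(m-1)$ such that $N(c,d)\ge \frac{(m-1)^k-(-1)^k}{m}+(-1)^k$ for all $(c,d)\in A$ and $N(c,d)\ge \frac{(m-1)^k-(-1)^k}{m}$ for all $(c,d)\in B$.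
   Context: An $m$-assignment $L$ for a graph assigns to each vertex $v$ a set $L(v)$ of exactly $m$ colors; a proper $L$-coloring is a proper vertex coloring $f$ with $f(v)\in L(v)$ for every vertex $v$. *)

theory Defs
  imports Complex_Main "HOL-Library.FuncSet"
begin

text \<open>The path P with k edges has vertices 0,1,...,k (vertex i is x_i) and edges {i, i+1}
  for i < k. A list assignment L gives each vertex i a set L i of colors.\<close>

definition m_assignment :: "nat \<Rightarrow> nat \<Rightarrow> (nat \<Rightarrow> 'c set) \<Rightarrow> bool" where
  "m_assignment k m L \<longleftrightarrow> (\<forall>i\<le>k. finite (L i) \<and> card (L i) = m)"

definition path_L_colorings :: "nat \<Rightarrow> (nat \<Rightarrow> 'c set) \<Rightarrow> (nat \<Rightarrow> 'c) set" where
  "path_L_colorings k L =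
     {f \<in> {0..k} \<rightarrow>\<^sub>E UNIV. (\<forall>i\<le>k. f i \<in> L i) \<and> (\<forall>i<k. f i \<noteq> f (Suc i))}"

definition N_path :: "nat \<Rightarrow> (nat \<Rightarrow> 'c set) \<Rightarrow> 'c \<Rightarrow> 'c \<Rightarrow> nat" where
  "N_path k L c d = card {f \<in> path_L_colorings k L. f 0 = c \<and> f k = d}"

end

theory Submission
  imports Defs
begin

lemma col_finite:
  assumes "\<forall>i\<le>k. finite (L i)"
  shows "finite (path_L_colorings k L)"
proof -
  have "path_L_colorings k L \<subseteq> PiE {0..k} L"
    unfolding path_L_colorings_def by (auto simp: PiE_iff extensional_def)
  moreover have "finite (PiE {0..k} L)" using assms by (intro finite_PiE) auto
  ultimately show ?thesis by (rule finite_subset)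
qed

lemma N_step:
  assumes fin: "\<forall>i\<le>Suc k. finite (L i)" and e: "e \<in> L (Suc k)"
  shows "N_path (Suc k) L c e = (\<Sum>d\<in>L k - {e}. N_path k L c d)"
proof -
  define S where "S d = {g \<in> path_L_colorings k L. g 0 = c \<and> g k = d}" for d
  have eq: "{f \<in> path_L_colorings (Suc k) L. f 0 = c \<and> f (Suc k) = e}
      = (\<Union>d\<in>L k - {e}. (\<lambda>g. g(Suc k := e)) ` S d)"
  proof (rule set_eqI, rule iffI)
    fix f assume f: "f \<in> {f \<in> path_L_colorings (Suc k) L. f 0 = c \<and> f (Suc k) = e}"
    define g where "g = f(Suc k := undefined)"
    have fe: "f \<in> {0..Suc k} \<rightarrow>\<^sub>E UNIV" and fL: "\<forall>i\<le>Suc k. f i \<in> L i"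
      and fp: "\<forall>i<Suc k. f i \<noteq> f (Suc i)" and f0: "f 0 = c" and fk: "f (Suc k) = e"
      using f unfolding path_L_colorings_def by auto
    have "g \<in> {0..k} \<rightarrow>\<^sub>E UNIV" using fe unfolding g_def by (auto simp: PiE_iff extensional_def)
    moreover have "\<forall>i\<le>k. g i \<in> L i" using fL unfolding g_def by auto
    moreover have "\<forall>i<k. g i \<noteq> g (Suc i)" using fp unfolding g_def by auto
    ultimately have "g \<in> S (f k)" unfolding S_def path_L_colorings_def g_def using f0 by auto
    moreover have "f k \<in> L k - {e}" using fL fp fk by auto
    moreover have "f = g(Suc k := e)" unfolding g_def using fk by auto
    ultimately show "f \<in> (\<Union>d\<in>L k - {e}. (\<lambda>g. g(Suc k := e)) ` S d)" by blast
  next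
    fix f assume "f \<in> (\<Union>d\<in>L k - {e}. (\<lambda>g. g(Suc k := e)) ` S d)"
    then obtain d g where d: "d \<in> L k - {e}" and g: "g \<in> S d" and fg: "f = g(Suc k := e)" by blast
    have ge: "g \<in> {0..k} \<rightarrow>\<^sub>E UNIV" and gL: "\<forall>i\<le>k. g i \<in> L i"
      and gp: "\<forall>i<k. g i \<noteq> g (Suc i)" and g0: "g 0 = c" and gk: "g k = d"
      using g unfolding S_def path_L_colorings_def by auto
    have "f \<in> {0..Suc k} \<rightarrow>\<^sub>E UNIV" using ge unfolding fg by (auto simp: PiE_iff extensional_def)
    moreover have "\<forall>i\<le>Suc k. f i \<in> L i" using gL e unfolding fg by (auto simp: le_Suc_eq)
    moreover have "\<forall>i<Suc k. f i \<noteq> f (Suc i)" using gp d gk unfolding fg by (auto simp: less_Suc_eq)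
    ultimately show "f \<in> {f \<in> path_L_colorings (Suc k) L. f 0 = c \<and> f (Suc k) = e}"
      unfolding path_L_colorings_def fg using g0 by auto
  qed
  have finS: "finite (S d)" for d
    using col_finite[of k L] fin unfolding S_def by auto
  have inj: "inj_on (\<lambda>g. g(Suc k := e)) (S d)" for d
  proof (rule inj_onI)
    fix g h assume "g \<in> S d" "h \<in> S d" and gh: "g(Suc k := e) = h(Suc k := e)"
    then have "g \<in> extensional {0..k}" "h \<in> extensional {0..k}"
      unfolding S_def path_L_colorings_def by (auto simp: PiE_def)
    then have "g (Suc k) = h (Suc k)" by (simp add: extensional_def)
    then show "g = h" using gh by (metis fun_upd_triv fun_upd_upd)
  qed
  have "N_path (Suc k) L c e = card (\<Union>d\<in>L k - {e}. (\<lambda>g. g(Suc k := e)) ` S d)"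
    unfolding N_path_def eq ..
  also have "\<dots> = (\<Sum>d\<in>L k - {e}. card ((\<lambda>g. g(Suc k := e)) ` S d))"
  proof (rule card_UN_disjoint)
    show "finite (L k - {e})" using fin by auto
    show "\<forall>i\<in>L k - {e}. finite ((\<lambda>g. g(Suc k := e)) ` S i)" using finS by auto
    show "\<forall>i\<in>L k - {e}. \<forall>j\<in>L k - {e}. i \<noteq> j \<longrightarrow>
      (\<lambda>g. g(Suc k := e)) ` S i \<inter> (\<lambda>g. g(Suc k := e)) ` S j = {}"
      unfolding S_def by (auto dest!: fun_cong[where x=k])
  qed
  also have "\<dots> = (\<Sum>d\<in>L k - {e}. N_path k L c d)"
    using inj by (simp add: card_image N_path_def S_def)
  finally show ?thesis .
qed


lemma sum_lb1:
  fixes f :: "'a \<Rightarrow> nat"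
  assumes "finite S" "x \<in> S" "f x \<ge> B" "\<forall>y\<in>S-{x}. f y \<ge> a"
  shows "sum f S \<ge> B + (card S - 1) * a"
proof -
  have "sum f S = f x + sum f (S - {x})" using assms by (simp add: sum.remove)
  moreover have "card (S - {x}) = card S - 1" using assms by simp
  moreover have "sum f (S - {x}) \<ge> card (S - {x}) * a"
    using sum_bounded_below[of "S - {x}" a f] assms(4) by (simp add: mult.commute)
  ultimately have "sum f (S - {x}) \<ge> (card S - 1) * a" by simp
  with \<open>sum f S = f x + sum f (S - {x})\<close> show ?thesis using assms(3) by linarith
qed

lemma sum_lb2:
  fixes f :: "'a \<Rightarrow> nat"
  assumes "\<forall>y\<in>S. f y \<ge> a"
  shows "sum f S \<ge> card S * a"
  using sum_bounded_below[of S a f] assms by (simp add: mult.commute)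

fun ab :: "nat \<Rightarrow> nat \<Rightarrow> nat \<times> nat" where
  "ab m 0 = (0, 1)"
| "ab m (Suc k) = (snd (ab m k) + (m - 2) * fst (ab m k), (m - 1) * fst (ab m k))"

lemma ab_real:
  assumes "m \<ge> 2"
  shows "real (fst (ab m k)) = (real (m - 1) ^ k - (-1) ^ k) / real m
       \<and> real (snd (ab m k)) = (real (m - 1) ^ k - (-1) ^ k) / real m + (-1) ^ k"
proof (induction k)
  case 0
  then show ?case by simp
next
  case (Suc k)
  have m: "real m > 0" using assms by simp
  have m2: "real (m - 2) = real m - 2" "real (m - 1) = real m - 1" using assms by auto
  obtain r where r: "m = Suc (Suc r)" using assms by (metis add_2_eq_Suc le_Suc_ex)
  have I1: "real (fst (ab m k)) = (real (m - 1) ^ k - (-1) ^ k) / real m"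
    and I2: "real (snd (ab m k)) = (real (m - 1) ^ k - (-1) ^ k) / real m + (-1) ^ k"
    using Suc by auto
  define x where "x = real r"
  have x: "x \<ge> 0" unfolding x_def by simp
  have e1: "(q - s)/(x+2) + s + x*((q-s)/(x+2)) = ((x+1)*q + s)/(x+2)" for q s
    using x by (simp add: divide_simps) (simp add: algebra_simps)
  have e2: "(x+1)*((q - s)/(x+2)) = ((x+1)*q + s)/(x+2) - s" for q s
    using x by (simp add: divide_simps) (simp add: algebra_simps)
  have rm: "real m = x + 2" "real (m - 1) = x + 1" "real (m - 2) = x" "real (m - Suc 0) = x + 1" unfolding r x_def by auto
  show ?case
    using e1[of "(x+1)^k" "(-1)^k"] e2[of "(x+1)^k" "(-1)^k"]
    by (simp add: I1 I2 rm)
qed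

lemma N_base:
  assumes "finite (L 0)" "c \<in> L 0"
  shows "N_path 0 L c c \<ge> 1"
proof -
  let ?f = "\<lambda>i::nat. if i = 0 then c else undefined"
  have "?f \<in> {f \<in> path_L_colorings 0 L. f 0 = c \<and> f 0 = c}"
    using assms unfolding path_L_colorings_def by (auto simp: PiE_iff extensional_def)
  moreover have "finite {f \<in> path_L_colorings 0 L. f 0 = c \<and> f 0 = c}"
    using col_finite[of 0 L] assms by auto
  ultimately show ?thesis unfolding N_path_def
    by (metis (no_types, lifting) One_nat_def Suc_leI card_gt_0_iff empty_iff)
qed

lemma inv:
  assumes "m_assignment k m L" "m \<ge> 2"
  shows "\<exists>\<phi>. bij_betw \<phi> (L 0) (L k) \<and> (\<forall>c\<in>L 0. N_path k L c (\<phi> c) \<ge> snd (ab m k)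
     \<and> (\<forall>d\<in>L k. d \<noteq> \<phi> c \<longrightarrow> N_path k L c d \<ge> fst (ab m k)))"
  using assms(1)
proof (induction k)
  case 0
  have "finite (L 0)" using 0 unfolding m_assignment_def by auto
  then show ?case using N_base[of L] by (intro exI[of _ id]) (auto simp: bij_betw_def)
next
  case (Suc k)
  have mk: "m_assignment k m L" using Suc.prems unfolding m_assignment_def by auto
  have fin: "\<forall>i\<le>Suc k. finite (L i)" and cd: "\<forall>i\<le>Suc k. card (L i) = m"
    using Suc.prems unfolding m_assignment_def by auto
  obtain \<phi> where phi: "bij_betw \<phi> (L 0) (L k)"
    and Nb: "\<And>c. c\<in>L 0 \<Longrightarrow> N_path k L c (\<phi> c) \<ge> snd (ab m k)"
    and Na: "\<And>c d. c\<in>L 0 \<Longrightarrow> d\<in>L k \<Longrightarrow> d \<noteq> \<phi> c \<Longrightarrow> N_path k L c d \<ge> fst (ab m k)"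
    using Suc.IH[OF mk] by blast
  define U where "U = L k"
  define T where "T = L (Suc k)"
  define R where "R = {c\<in>L 0. \<phi> c \<notin> T}"
  define S0 where "S0 = {c\<in>L 0. \<phi> c \<in> T}"
  have finU: "finite U" and finT: "finite T" and cU: "card U = m" and cT: "card T = m"
    and fin0: "finite (L 0)"
    using fin cd unfolding U_def T_def by auto
  have imR: "\<phi> ` R = U - T" and imS: "\<phi> ` S0 = U \<inter> T"
    using phi unfolding R_def S0_def U_def bij_betw_def by auto
  have injR: "inj_on \<phi> R" and injS: "inj_on \<phi> S0"
    using phi unfolding R_def S0_def bij_betw_def by (auto intro: inj_on_subset)
  have "card R = card (U - T)" using card_image[OF injR] imR by simp
  also have "\<dots> = card U - card (U \<inter> T)" using finU by (metis card_Diff_subset_Int Diff_Int2 finite_Int inf_commute Int_lower1 card_Diff_subset)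
  also have "\<dots> = card T - card (T \<inter> U)" using cU cT by (simp add: Int_commute)
  also have "\<dots> = card (T - U)" using finT by (simp add: card_Diff_subset_Int)
  finally have "card R = card (T - U)" .
  moreover have "finite R" using fin0 unfolding R_def by auto
  ultimately obtain g where g: "bij_betw g R (T - U)"
    using finite_same_card_bij finT by blast
  define \<psi> where "\<psi> c = (if \<phi> c \<in> T then \<phi> c else g c)" for c
  have b1: "bij_betw \<psi> S0 (U \<inter> T)"
  proof -
    have "bij_betw \<phi> S0 (U \<inter> T)" using injS imS by (simp add: bij_betw_def)
    then show ?thesis by (rule bij_betw_cong[THEN iffD1, rotated]) (auto simp: \<psi>_def S0_def)
  qed
  have b2: "bij_betw \<psi> R (T - U)"
    using g by (rule bij_betw_cong[THEN iffD1, rotated]) (auto simp: \<psi>_def R_def)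
  have "bij_betw \<psi> (S0 \<union> R) ((U \<inter> T) \<union> (T - U))"
    by (rule bij_betw_combine[OF b1 b2]) auto
  moreover have "S0 \<union> R = L 0" unfolding S0_def R_def by auto
  moreover have "(U \<inter> T) \<union> (T - U) = T" by auto
  ultimately have psi: "bij_betw \<psi> (L 0) (L (Suc k))" unfolding T_def by simp
  let ?a = "fst (ab m k)" and ?b = "snd (ab m k)"
  have step: "N_path (Suc k) L c e = (\<Sum>d\<in>U - {e}. N_path k L c d)" if "e \<in> T" for c e
    using N_step[OF fin, of e c] that unfolding U_def T_def by simp
  have phiU: "\<phi> c \<in> U" if "c \<in> L 0" for c using phi that unfolding bij_betw_def U_def by auto
  have case1: "N_path (Suc k) L c e \<ge> ?b + (m - 1) * ?a" if "c \<in> L 0" "e \<in> T" "e \<notin> U" for c e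
  proof -
    have "U - {e} = U" using that by auto
    then show ?thesis using step[OF that(2), of c] sum_lb1[of U "\<phi> c" ?b "N_path k L c" ?a] finU phiU[OF that(1)] Nb[OF that(1)]
      Na[OF that(1)] cU unfolding U_def by auto
  qed
  have mono: "(m - 2) * ?a \<le> (m - 1) * ?a" by (intro mult_le_mono1 diff_le_mono2) simp
  have case2: "N_path (Suc k) L c e \<ge> (m - 1) * ?a" if "c \<in> L 0" "e \<in> T" "e = \<phi> c" for c e
  proof -
    have "card (U - {e}) = m - 1" using that phiU cU finU by simp
    then show ?thesis using step[OF that(2), of c] sum_lb2[of "U - {e}" ?a "N_path k L c"]
      Na[OF that(1)] that(3) unfolding U_def by auto
  qed
  have case3: "N_path (Suc k) L c e \<ge> ?b + (m - 2) * ?a" if "c \<in> L 0" "e \<in> T" "e \<in> U" "e \<noteq> \<phi> c" for c e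
  proof -
    have "card (U - {e}) = m - 1" using that phiU cU finU by simp
    moreover have "m - 1 - 1 = m - 2" by simp
    ultimately show ?thesis using step[OF that(2), of c]
      sum_lb1[of "U - {e}" "\<phi> c" ?b "N_path k L c" ?a] finU phiU[OF that(1)] that
      Nb[OF that(1)] Na[OF that(1)] unfolding U_def by auto
  qed
  show ?case
  proof (intro exI[of _ \<psi>] conjI ballI impI allI psi)
    fix c assume c: "c \<in> L 0"
    have psiT: "\<psi> c \<in> T" using psi c unfolding T_def bij_betw_def by auto
    show "N_path (Suc k) L c (\<psi> c) \<ge> snd (ab m (Suc k))"
    proof (cases "\<phi> c \<in> T")
      case True
      then show ?thesis using case2[OF c psiT] unfolding \<psi>_def by simp
    next
      case False
      then have "c \<in> R" using c unfolding R_def by auto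
      then have "\<psi> c \<notin> U" using g False unfolding \<psi>_def bij_betw_def by auto
      then show ?thesis using case1[OF c psiT] by simp
    qed
    fix e assume e: "e \<in> L (Suc k)" "e \<noteq> \<psi> c"
    show "N_path (Suc k) L c e \<ge> fst (ab m (Suc k))"
    proof (cases "e \<in> U")
      case False
      have h: "?b + (m - 1) * ?a \<le> N_path (Suc k) L c e"
        using case1[OF c _ False] e unfolding T_def by blast
      have "fst (ab m (Suc k)) = ?b + (m - 2) * ?a" by simp
      then show ?thesis using h mono by linarith
    next
      case True
      have "e \<noteq> \<phi> c" using e unfolding \<psi>_def T_def by auto
      then show ?thesis using case3[OF c _ True] e unfolding T_def by simp
    qed
  qed
qed


theorem lemma2p7:
  fixes k m :: nat and L :: "nat \<Rightarrow> 'c set"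
  assumes "m_assignment k m L" and "m \<ge> 2"
  shows "(\<forall>c\<in>L 0. \<forall>d\<in>L k.
            real (N_path k L c d) \<ge>
              min ((real (m - 1) ^ k - (-1) ^ k) / real m)
                  ((real (m - 1) ^ k - (-1) ^ k) / real m + (-1) ^ k))
       \<and> (\<exists>A B. A \<union> B = L 0 \<times> L k \<and> A \<inter> B = {} \<and> card A = m \<and> card B = m * (m - 1)
            \<and> (\<forall>(c, d)\<in>A. real (N_path k L c d) \<ge> (real (m - 1) ^ k - (-1) ^ k) / real m + (-1) ^ k)
            \<and> (\<forall>(c, d)\<in>B. real (N_path k L c d) \<ge> (real (m - 1) ^ k - (-1) ^ k) / real m))"
proof -
  obtain \<phi> where phi: "bij_betw \<phi> (L 0) (L k)"
    and Nb: "\<And>c. c\<in>L 0 \<Longrightarrow> N_path k L c (\<phi> c) \<ge> snd (ab m k)"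
    and Na: "\<And>c d. c\<in>L 0 \<Longrightarrow> d\<in>L k \<Longrightarrow> d \<noteq> \<phi> c \<Longrightarrow> N_path k L c d \<ge> fst (ab m k)"
    using inv[OF assms] by blast
  let ?a = "(real (m - 1) ^ k - (-1) ^ k) / real m"
  let ?b = "(real (m - 1) ^ k - (-1) ^ k) / real m + (-1) ^ k"
  have ra: "real (fst (ab m k)) = ?a" and rb: "real (snd (ab m k)) = ?b"
    using ab_real[OF assms(2)] by auto
  have RA: "real (N_path k L c d) \<ge> ?a" if "c \<in> L 0" "d \<in> L k" "d \<noteq> \<phi> c" for c d
    using Na[OF that] ra by (metis of_nat_le_iff)
  have RB: "real (N_path k L c (\<phi> c)) \<ge> ?b" if "c \<in> L 0" for c
    using Nb[OF that] rb by (metis of_nat_le_iff)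
  have fin: "finite (L 0)" "finite (L k)" "card (L 0) = m" "card (L k) = m"
    using assms(1) unfolding m_assignment_def by auto
  define A where "A = (\<lambda>c. (c, \<phi> c)) ` L 0"
  define B where "B = L 0 \<times> L k - A"
  have Asub: "A \<subseteq> L 0 \<times> L k" using phi unfolding A_def bij_betw_def by auto
  have cA: "card A = m" unfolding A_def using fin
    by (subst card_image) (auto simp: inj_on_def)
  have cB: "card B = m * (m - 1)"
  proof -
    have "card B = card (L 0 \<times> L k) - card A"
      unfolding B_def using Asub fin by (intro card_Diff_subset) (auto intro: finite_subset)
    also have "\<dots> = m * m - m" using fin cA by (simp add: card_cartesian_product)
    finally show ?thesis by (simp add: diff_mult_distrib2)
  qed
  show ?thesis
  proof (rule conjI)
    show "\<forall>c\<in>L 0. \<forall>d\<in>L k. real (N_path k L c d) \<ge> min ?a ?b"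
    proof (intro ballI)
      fix c d assume c: "c \<in> L 0" and d: "d \<in> L k"
      show "real (N_path k L c d) \<ge> min ?a ?b"
      proof (cases "d = \<phi> c")
        case True then show ?thesis using RB[OF c] by simp
      next
        case False then show ?thesis using RA[OF c d] by simp
      qed
    qed
  next
    show "\<exists>A B. A \<union> B = L 0 \<times> L k \<and> A \<inter> B = {} \<and> card A = m \<and> card B = m * (m - 1)
            \<and> (\<forall>(c, d)\<in>A. real (N_path k L c d) \<ge> ?b)
            \<and> (\<forall>(c, d)\<in>B. real (N_path k L c d) \<ge> ?a)"
    proof (rule exI[of _ A], rule exI[of _ B], intro conjI)
    show "A \<union> B = L 0 \<times> L k" using Asub unfolding B_def by auto
    show "A \<inter> B = {}" unfolding B_def by auto
    show "card A = m" by (rule cA)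
    show "card B = m * (m - 1)" by (rule cB)
    show "\<forall>(c, d)\<in>A. real (N_path k L c d) \<ge> ?b" unfolding A_def using RB by auto
    show "\<forall>(c, d)\<in>B. real (N_path k L c d) \<ge> ?a" unfolding B_def A_def using RA by auto
  qed
  qed
qed

end
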